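(* Let $\gamma_k>0$, $k\in\mathcal{N}$, let $y(t)$ solve $\dot y_k=\gamma_kv_k(Q(y))$, and let $x(t)=Q(y(t))$. Assume each player's penalty function is decomposable, $h_k(x_k)=\sum_{\beta\in\mathcal{A}_k}\theta_k(x_{k\beta})$. If $\alpha,\beta\in\mathcal{A}_k$ with $\alpha\prec\beta$ (i.e. $v_{k\alpha}(x)<v_{k\beta}(x)$ for all $x\in\mathcal{X}$), then for all $t\ge0$ $$x_{k\alpha}(t)\le\phi_k(c_k-\gamma_k\delta_kt),$$ where $c_k$ is a constant depending only on the initial conditions, $\delta_k=\min\{v_{k\beta}(x)-v_{k\alpha}(x):x\in\mathcal{X}\}$, and $\phi_k(z)=0$ if $z\le\theta_k'(0^+)$, $\phi_k(z)=1$ if $z\ge\theta_k'(1^-)$, and $\phi_k(z)=(\theta_k')^{-1}(z)$ otherwise. In particular, if $\theta_k'(0)$ is finite, dominated strategies become extinct in finite time.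
   Context: Setting: finite game with players $\mathcal{N}$, action sets $\mathcal{A}_k$, mixed strategies $\mathcal{X}_k=\Delta(\mathcal{A}_k)$, $\mathcal{X}=\prod_k\mathcal{X}_k$, payoff vectors $v_k(x)=(u_k(\alpha;x_{-k}))_{\alpha\in\mathcal{A}_k}$ with $u_k$ multilinear expected payoffs. The kernel $\theta_k:[0,1]\to\mathbb{R}$ is continuous, strongly convex and smooth on $(0,1]$; then $h_k$ is a penalty function (continuous, smooth on relative interiors of faces, strongly convex) on $\mathcal{X}_k$ with choice map $Q_k(y_k)=\arg\max_{x_k\in\mathcal{X}_k}\{\langle y_k,x_k\rangle-h_k(x_k)\}$; $Q=(Q_k)_k$. $\theta_k'(0^+)$ and $\theta_k'(1^-)$ denote one-sided limits of $\theta_k'$ (possibly $-\infty$ at $0$). *)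

theory Defs
  imports "HOL-Analysis.Analysis"
begin

definition strongly_convex_on :: "real set \<Rightarrow> (real \<Rightarrow> real) \<Rightarrow> bool" where
  "strongly_convex_on S f \<longleftrightarrow> (\<exists>m>0. \<forall>a\<in>S. \<forall>b\<in>S. \<forall>l\<in>{0..1}.
      f (l * a + (1 - l) * b) \<le> l * f a + (1 - l) * f b - m / 2 * l * (1 - l) * (a - b)^2)"

definition mixed_strats :: "'a set \<Rightarrow> ('a \<Rightarrow> real) set" where
  "mixed_strats A = {p. (\<forall>a\<in>A. 0 \<le> p a) \<and> sum p A = 1 \<and> (\<forall>a. a \<notin> A \<longrightarrow> p a = 0)}"

definition strategy_space :: "'n set \<Rightarrow> ('n \<Rightarrow> 'a set) \<Rightarrow> ('n \<Rightarrow> 'a \<Rightarrow> real) set" where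
  "strategy_space N A = {x. (\<forall>k\<in>N. x k \<in> mixed_strats (A k)) \<and> (\<forall>k. k \<notin> N \<longrightarrow> x k = (\<lambda>_. 0))}"

definition exp_payoff :: "'n set \<Rightarrow> ('n \<Rightarrow> 'a set) \<Rightarrow> ('n \<Rightarrow> ('n \<Rightarrow> 'a) \<Rightarrow> real)
    \<Rightarrow> 'n \<Rightarrow> ('n \<Rightarrow> 'a \<Rightarrow> real) \<Rightarrow> real" where
  "exp_payoff N A u k x = (\<Sum>p\<in>PiE N A. (\<Prod>j\<in>N. x j (p j)) * u k p)"

definition payoff_vec :: "'n set \<Rightarrow> ('n \<Rightarrow> 'a set) \<Rightarrow> ('n \<Rightarrow> ('n \<Rightarrow> 'a) \<Rightarrow> real)
    \<Rightarrow> 'n \<Rightarrow> 'a \<Rightarrow> ('n \<Rightarrow> 'a \<Rightarrow> real) \<Rightarrow> real" where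
  "payoff_vec N A u k \<alpha> x = exp_payoff N A u k (x(k := (\<lambda>b. if b = \<alpha> then 1 else 0)))"

definition decomp_penalty :: "(real \<Rightarrow> real) \<Rightarrow> 'a set \<Rightarrow> ('a \<Rightarrow> real) \<Rightarrow> real" where
  "decomp_penalty \<theta> A p = (\<Sum>b\<in>A. \<theta> (p b))"

definition choice_k :: "(('a \<Rightarrow> real) \<Rightarrow> real) \<Rightarrow> 'a set \<Rightarrow> ('a \<Rightarrow> real) \<Rightarrow> ('a \<Rightarrow> real)" where
  "choice_k h A y = (THE p. p \<in> mixed_strats A \<and>
      (\<forall>q\<in>mixed_strats A. (\<Sum>a\<in>A. y a * q a) - h q \<le> (\<Sum>a\<in>A. y a * p a) - h p))"

definition choice_map :: "'n set \<Rightarrow> ('n \<Rightarrow> 'a set) \<Rightarrow> ('n \<Rightarrow> ('a \<Rightarrow> real) \<Rightarrow> real)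
    \<Rightarrow> ('n \<Rightarrow> 'a \<Rightarrow> real) \<Rightarrow> ('n \<Rightarrow> 'a \<Rightarrow> real)" where
  "choice_map N A h y = (\<lambda>k. if k \<in> N then choice_k (h k) (A k) (y k) else (\<lambda>_. 0))"

definition deriv0 :: "(real \<Rightarrow> real) \<Rightarrow> ereal" where
  "deriv0 d = Lim (at_right 0) (\<lambda>s. ereal (d s))"

definition deriv1 :: "(real \<Rightarrow> real) \<Rightarrow> ereal" where
  "deriv1 d = Lim (at_left 1) (\<lambda>s. ereal (d s))"

definition phi :: "(real \<Rightarrow> real) \<Rightarrow> real \<Rightarrow> real" where
  "phi d z = (if ereal z \<le> deriv0 d then 0
              else if ereal z \<ge> deriv1 d then 1
              else (THE s. s \<in> {0<..<1} \<and> d s = z))"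

end

theory Submission
  imports Defs
begin


lemma compact_PiE_UNIV:
  fixes S :: "'b::topological_space set"
  assumes "compact S"
  shows "compact (PiE (UNIV::'i set) (\<lambda>_. S))"
proof -
  have "compactin (product_topology (\<lambda>i. euclidean) (UNIV::'i set)) (PiE UNIV (\<lambda>_. S))"
    using assms by (simp add: compactin_PiE compactin_euclidean_iff)
  then show ?thesis by (simp add: euclidean_product_topology compactin_euclidean_iff)
qed

lemma cont_eval2: "continuous_on UNIV (\<lambda>z::'n \<Rightarrow> 'a \<Rightarrow> real. z j b)"
proof -
  have "continuous_on UNIV ((\<lambda>f::'a\<Rightarrow>real. f b) \<circ> (\<lambda>z::'n \<Rightarrow> 'a \<Rightarrow> real. z j))"
    by (rule continuous_on_compose) (auto intro: continuous_on_subset[OF continuous_on_product_coordinates])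
  then show ?thesis by (simp add: o_def)
qed

lemma mixed_strats_closed: "closed (mixed_strats A)"
proof -
  have eq: "mixed_strats A = (\<Inter>a\<in>A. {p. 0 \<le> p a}) \<inter> {p. sum p A = 1} \<inter> (\<Inter>a\<in>-A. {p. p a = 0})"
    by (auto simp: mixed_strats_def)
  show ?thesis
    unfolding eq
    by (intro closed_Int closed_INT ballI closed_Collect_le closed_Collect_eq continuous_on_sum continuous_on_const) auto
qed

lemma mixed_strats_compact:
  assumes "finite A"
  shows "compact (mixed_strats A)"
proof -
  have sub: "mixed_strats A \<subseteq> PiE UNIV (\<lambda>_. {0..1::real})"
  proof
    fix p assume p: "p \<in> mixed_strats A"
    have "p a \<in> {0..1}" for a
    proof (cases "a \<in> A")
      case True
      then have "p a \<le> sum p A" using p assms by (intro member_le_sum) (auto simp: mixed_strats_def)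
      then show ?thesis using True p by (auto simp: mixed_strats_def)
    next
      case False then show ?thesis using p by (auto simp: mixed_strats_def)
    qed
    then show "p \<in> PiE UNIV (\<lambda>_. {0..1})" by auto
  qed
  have eq: "mixed_strats A = (\<Inter>a\<in>A. {p. 0 \<le> p a}) \<inter> {p. sum p A = 1} \<inter> (\<Inter>a\<in>-A. {p. p a = 0})"
    by (auto simp: mixed_strats_def)
  have "closed (mixed_strats A)"
    by (rule mixed_strats_closed)
  then show ?thesis
    using compact_Int_closed[OF compact_PiE_UNIV[OF compact_Icc[of "0::real" 1]], of "mixed_strats A"] sub
    by (simp add: Int_absorb1)
qed

lemma closed_vimage_UNIV: "continuous_on UNIV f \<Longrightarrow> closed B \<Longrightarrow> closed (f -` B)"
  using continuous_on_closed_vimage[of UNIV f] by auto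

lemma strategy_space_compact:
  assumes "\<And>j. j \<in> N \<Longrightarrow> finite (A j)"
  shows "compact (strategy_space N A)"
proof -
  have sub: "strategy_space N A \<subseteq> PiE UNIV (\<lambda>_. PiE UNIV (\<lambda>_. {0..1::real}))"
  proof
    fix x assume x: "x \<in> strategy_space N A"
    have "x j b \<in> {0..1}" for j b
    proof (cases "j \<in> N \<and> b \<in> A j")
      case True
      then have "x j b \<le> sum (x j) (A j)" using x assms
        by (intro member_le_sum) (auto simp: mixed_strats_def strategy_space_def)
      then show ?thesis using True x by (auto simp: mixed_strats_def strategy_space_def)
    next
      case False then show ?thesis using x by (cases "j \<in> N") (auto simp: mixed_strats_def strategy_space_def)
    qed
    then show "x \<in> PiE UNIV (\<lambda>_. PiE UNIV (\<lambda>_. {0..1}))" by auto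
  qed
  have eq: "strategy_space N A = (\<Inter>j\<in>N. (\<lambda>x. x j) -` mixed_strats (A j)) \<inter> (\<Inter>j\<in>-N. \<Inter>b. {x. x j b = 0})"
    by (auto simp: strategy_space_def)
  have "closed (strategy_space N A)"
    unfolding eq
    by (intro closed_Int closed_INT ballI closed_vimage_UNIV continuous_on_product_coordinates
        mixed_strats_closed closed_Collect_eq cont_eval2 continuous_on_const)
  then show ?thesis
    using compact_Int_closed[OF compact_PiE_UNIV[OF compact_PiE_UNIV[OF compact_Icc[of "0::real" 1]]], of "strategy_space N A"] sub
    by (simp add: Int_absorb1)
qed

lemma cont_upd: "continuous_on UNIV (\<lambda>z::'n \<Rightarrow> 'a \<Rightarrow> real. (z(k:=e)) j b)"
  by (cases "j = k") (simp_all add: cont_eval2)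

lemma payoff_vec_cont: "continuous_on UNIV (\<lambda>z. payoff_vec N A u k a z)"
  unfolding payoff_vec_def exp_payoff_def
  by (intro continuous_on_sum continuous_on_mult continuous_on_prod continuous_on_const cont_upd)



lemma tangent_sc:
  fixes th d :: "real \<Rightarrow> real"
  assumes sc: "\<forall>a\<in>{0..1}. \<forall>b\<in>{0..1}. \<forall>l\<in>{0..1}.
      th (l * a + (1 - l) * b) \<le> l * th a + (1 - l) * th b - m / 2 * l * (1 - l) * (a - b)^2"
    and der: "\<And>z. z \<in> {0<..1} \<Longrightarrow> (th has_real_derivative d z) (at z within {0..1})"
    and a: "a \<in> {0<..1}" and b: "b \<in> {0..1}"
  shows "th b \<ge> th a + d a * (b - a) + m / 2 * (b - a)^2"
proof -
  define g where "g = (\<lambda>l. a + l * (b - a))"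
  have gi: "g ` {0..1} \<subseteq> {0..1}"
  proof
    fix z assume "z \<in> g ` {0..1}"
    then obtain l where l: "l \<in> {0..1}" "z = g l" by auto
    have "z = l * b + (1 - l) * a" using l by (simp add: g_def algebra_simps)
    moreover have "0 \<le> l * b + (1 - l) * a" using l a b by auto
    moreover have "l * b + (1 - l) * a \<le> l * 1 + (1 - l) * 1"
      using l a b by (intro add_mono mult_left_mono) auto
    ultimately show "z \<in> {0..1}" by auto
  qed
  have dg: "(g has_real_derivative (b - a)) (at 0 within {0..1})"
    unfolding g_def by (auto intro!: derivative_eq_intros)
  have dth: "(th has_real_derivative d a) (at (g 0) within (g ` {0..1}))"
    using has_field_derivative_subset[OF der[OF a] gi] by (simp add: g_def)
  have "(th \<circ> g has_real_derivative d a * (b - a)) (at 0 within {0..1})"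
    by (rule DERIV_image_chain[OF dth dg])
  then have lim: "((\<lambda>l. (th (g l) - th (g 0)) / (l - 0)) \<longlongrightarrow> d a * (b - a)) (at_right 0)"
    unfolding has_field_derivative_iff by (simp add: at_within_Icc_at_right o_def)
  have lim2: "((\<lambda>l. th b - th a - m / 2 * (1 - l) * (b - a)^2) \<longlongrightarrow> th b - th a - m / 2 * (1 - 0) * (b - a)^2) (at_right 0)"
    by (intro tendsto_intros)
  have ev: "eventually (\<lambda>l. (th (g l) - th (g 0)) / (l - 0) \<le> th b - th a - m / 2 * (1 - l) * (b - a)^2) (at_right 0)"
    unfolding eventually_at_right_field
  proof (intro exI[of _ 1] conjI allI impI)
    fix l :: real assume l0: "0 < l" and l1: "l < 1"
    have l: "0 < l \<and> l < 1" using l0 l1 by simp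
    have "th (l * b + (1 - l) * a) \<le> l * th b + (1 - l) * th a - m / 2 * l * (1 - l) * (b - a)^2"
      using sc l a b by auto
    moreover have "g l = l * b + (1 - l) * a" "g 0 = a" by (simp_all add: g_def algebra_simps)
    ultimately have "th (g l) - th (g 0) \<le> l * (th b - th a - m / 2 * (1 - l) * (b - a)^2)"
      by (simp only:) (simp add: algebra_simps)
    then show "(th (g l) - th (g 0)) / (l - 0) \<le> th b - th a - m / 2 * (1 - l) * (b - a)^2"
      using l by (simp add: divide_simps mult.commute)
  qed simp
  have "d a * (b - a) \<le> th b - th a - m / 2 * (1 - 0) * (b - a)^2"
    by (rule tendsto_le[OF trivial_limit_at_right_real lim2 lim ev])
  then show ?thesis by simp
qed



locale thk =
  fixes th d :: "real \<Rightarrow> real" and m :: real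
  assumes m: "m > 0"
    and sc: "\<forall>a\<in>{0..1}. \<forall>b\<in>{0..1}. \<forall>l\<in>{0..1}.
      th (l * a + (1 - l) * b) \<le> l * th a + (1 - l) * th b - m / 2 * l * (1 - l) * (a - b)^2"
    and der: "\<And>z. z \<in> {0<..1} \<Longrightarrow> (th has_real_derivative d z) (at z within {0..1})"
    and dcont: "continuous_on {0<..1} d"
    and thcont: "continuous_on {0..1} th"
begin

lemma tangent: "a \<in> {0<..1} \<Longrightarrow> b \<in> {0..1} \<Longrightarrow> th b \<ge> th a + d a * (b - a) + m / 2 * (b - a)^2"
  by (rule tangent_sc[OF sc der])

lemma tangent': "a \<in> {0<..1} \<Longrightarrow> b \<in> {0..1} \<Longrightarrow> th b \<ge> th a + d a * (b - a)"
  using tangent[of a b] m by (smt (verit) divide_nonneg_nonneg mult_nonneg_nonneg zero_le_power2)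

lemma d_strict: assumes "a \<in> {0<..1}" "b \<in> {0<..1}" "a < b" shows "d a < d b"
proof -
  have 1: "th b \<ge> th a + d a * (b - a) + m / 2 * (b - a)^2" using tangent assms by auto
  have 2: "th a \<ge> th b + d b * (a - b) + m / 2 * (a - b)^2" using tangent assms by auto
  have "m / 2 * (b - a)^2 > 0" using m assms by auto
  then have "(d b - d a) * (b - a) > 0" using 1 2 by (simp add: power2_commute algebra_simps)
  then show ?thesis using assms by (simp add: zero_less_mult_iff)
qed

lemma d_mono: "a \<in> {0<..1} \<Longrightarrow> b \<in> {0<..1} \<Longrightarrow> a \<le> b \<Longrightarrow> d a \<le> d b"
  using d_strict by (cases "a = b") (auto simp: less_le)

lemma d_left_limit:
  assumes p: "p \<in> {0<..1}" and C: "\<And>s. 0 < s \<Longrightarrow> s < p \<Longrightarrow> d s \<le> C"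
  shows "d p \<le> C"
proof -
  have "(d \<longlongrightarrow> d p) (at p within {0<..1})" using dcont p by (simp add: continuous_on_def)
  then have "(d \<longlongrightarrow> d p) (at p within {p/2..p})"
    by (rule tendsto_within_subset) (use p in auto)
  then have lim: "(d \<longlongrightarrow> d p) (at_left p)" using p by (simp add: at_within_Icc_at_left)
  have "eventually (\<lambda>s. d s \<le> C) (at_left p)"
    unfolding eventually_at_left_field using p C by (intro exI[of _ 0]) auto
  then show ?thesis by (rule tendsto_upperbound[OF lim]) simp
qed

definition L0 where "L0 = (INF s\<in>{0<..1::real}. ereal (d s))"

lemma deriv0_eq: "deriv0 d = L0"
proof -
  have "((\<lambda>s. ereal (d s)) \<longlongrightarrow> L0) (at_right 0)"
  proof (rule order_tendstoI)
    fix a assume "a < L0"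
    then have "\<forall>s\<in>{0<..1}. a < ereal (d s)" unfolding L0_def
      using INF_lower less_le_trans by (metis (no_types, lifting))
    then show "eventually (\<lambda>s. a < ereal (d s)) (at_right 0)"
      unfolding eventually_at_right_field by (intro exI[of _ 1]) auto
  next
    fix a assume "L0 < a"
    then obtain s0 where s0: "s0 \<in> {0<..1}" "ereal (d s0) < a" unfolding L0_def
      by (auto simp: INF_less_iff)
    show "eventually (\<lambda>s. ereal (d s) < a) (at_right 0)"
      unfolding eventually_at_right_field
    proof (intro exI[of _ s0] conjI allI impI)
      fix s :: real assume "0 < s" "s < s0"
      then have "d s \<le> d s0" using s0 by (intro d_mono) auto
      then show "ereal (d s) < a" using s0 by (meson ereal_less_eq(3) order_le_less_trans)
    qed (use s0 in auto)
  qed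
  then show ?thesis unfolding deriv0_def by (intro tendsto_Lim) simp_all
qed

lemma deriv1_eq: "deriv1 d = ereal (d 1)"
proof -
  have "(d \<longlongrightarrow> d 1) (at 1 within {0<..1})" using dcont by (simp add: continuous_on_def)
  then have "(d \<longlongrightarrow> d 1) (at 1 within {1/2..1})"
    by (rule tendsto_within_subset) auto
  then have lim: "(d \<longlongrightarrow> d 1) (at_left 1)" by (simp add: at_within_Icc_at_left)
  have "((\<lambda>s. ereal (d s)) \<longlongrightarrow> ereal (d 1)) (at_left 1)"
    using lim by (rule tendsto_ereal)
  then show ?thesis unfolding deriv1_def by (intro tendsto_Lim) simp_all
qed

lemma L0_less: "p \<in> {0<..1} \<Longrightarrow> L0 < ereal (d p)"
proof -
  assume p: "p \<in> {0<..1}"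
  have "L0 \<le> ereal (d (p/2))" unfolding L0_def using p by (intro INF_lower) auto
  also have "\<dots> < ereal (d p)" using p by (simp add: d_strict)
  finally show ?thesis .
qed

lemma phi_mid:
  assumes c: "\<not> ereal z \<le> deriv0 d" "\<not> ereal z \<ge> deriv1 d"
  shows "phi d z \<in> {0<..<1} \<and> d (phi d z) = z"
proof -
    have z0': "L0 < ereal z" and z1': "z < d 1" using c deriv0_eq deriv1_eq by auto
    then obtain s0 where s0: "s0 \<in> {0<..1}" "ereal (d s0) < ereal z" unfolding L0_def
      by (auto simp: INF_less_iff)
    have "continuous_on {s0..1} d" using s0 by (intro continuous_on_subset[OF dcont]) auto
    then obtain s where s: "s0 \<le> s" "s \<le> 1" "d s = z"
      using IVT'[of d s0 z 1] s0 z1' by auto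
    have s1: "s < 1" using s z1' by (cases "s = 1") auto
    have ex: "s \<in> {0<..<1} \<and> d s = z" using s s1 s0 by auto
    have un: "\<And>s'. s' \<in> {0<..<1} \<and> d s' = z \<Longrightarrow> s' = s"
      using ex d_strict by (metis greaterThanLessThan_iff greaterThanAtMost_iff less_imp_le linorder_neqE_linordered_idom less_irrefl)
    have "(THE s. s \<in> {0<..<1} \<and> d s = z) = s" using ex un by (rule the_equality)
    then have "phi d z = s" using c by (simp add: phi_def)
    then show ?thesis using ex by simp
qed

lemma phi_nonneg: "0 \<le> phi d z"
  using phi_mid[of z] by (auto simp: phi_def)

lemma phi_bound:
  assumes p: "p \<in> {0<..1}" and dz: "d p \<le> z"
  shows "p \<le> phi d z"
proof -
  consider (a) "ereal z \<le> deriv0 d" | (b) "\<not> ereal z \<le> deriv0 d" "ereal z \<ge> deriv1 d"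
    | (c) "\<not> ereal z \<le> deriv0 d" "\<not> ereal z \<ge> deriv1 d" by blast
  then show ?thesis
  proof cases
    case a
    then have "ereal (d p) \<le> L0" using dz deriv0_eq by (metis ereal_less_eq(3) order_trans)
    then show ?thesis using L0_less[OF p] by simp
  next
    case b then show ?thesis using p by (simp add: phi_def)
  next
    case c
    define s where "s = phi d z"
    have ex: "s \<in> {0<..<1} \<and> d s = z" using phi_mid[OF c] by (simp add: s_def)
    have "p \<le> s"
    proof (rule ccontr)
      assume "\<not> p \<le> s"
      then have "d s < d p" using ex p by (intro d_strict) auto
      then show False using dz ex by simp
    qed
    then show ?thesis by (simp add: s_def)
  qed
qed

end


lemma ms_range: "q \<in> mixed_strats A \<Longrightarrow> finite A \<Longrightarrow> q b \<in> {0..1}"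
proof (cases "b \<in> A")
  case True
  assume q: "q \<in> mixed_strats A" and f: "finite A"
  then have "q b \<le> sum q A" using True by (intro member_le_sum) (auto simp: mixed_strats_def)
  then show ?thesis using True q by (auto simp: mixed_strats_def)
next
  case False then show "q \<in> mixed_strats A \<Longrightarrow> finite A \<Longrightarrow> q b \<in> {0..1}" by (auto simp: mixed_strats_def)
qed

context thk begin

definition F :: "'a set \<Rightarrow> ('a \<Rightarrow> real) \<Rightarrow> ('a \<Rightarrow> real) \<Rightarrow> real" where
  "F A y q = (\<Sum>a\<in>A. y a * q a) - decomp_penalty th A q"

lemma choice_max:
  assumes fin: "finite A" and ne: "A \<noteq> {}"
  shows "choice_k (decomp_penalty th A) A y \<in> mixed_strats A \<and>
    (\<forall>q\<in>mixed_strats A. F A y q \<le> F A y (choice_k (decomp_penalty th A) A y))"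
proof -
  obtain a0 where a0: "a0 \<in> A" using ne by auto
  have nem: "(\<lambda>b. if b = a0 then 1 else 0) \<in> mixed_strats A"
    using a0 fin by (auto simp: mixed_strats_def)
  have cont: "continuous_on (mixed_strats A) (F A y)"
    unfolding F_def decomp_penalty_def
  proof (intro continuous_intros)
    fix b assume "b \<in> A"
    show "continuous_on (mixed_strats A) (\<lambda>q. th (q b))"
      by (rule continuous_on_compose2[OF thcont, of _ "\<lambda>q. q b"])
         (auto intro: continuous_on_subset[OF continuous_on_product_coordinates] ms_range[OF _ fin])
  qed (auto intro: continuous_on_subset[OF continuous_on_product_coordinates])
  obtain p where p: "p \<in> mixed_strats A" "\<forall>q\<in>mixed_strats A. F A y q \<le> F A y p"
    using continuous_attains_sup[OF mixed_strats_compact[OF fin] _ cont] nem by blast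
  have uniq: "q = p" if q: "q \<in> mixed_strats A" "\<forall>r\<in>mixed_strats A. F A y r \<le> F A y q" for q
  proof (rule ccontr)
    assume ne: "q \<noteq> p"
    then obtain b where b: "q b \<noteq> p b" by auto
    have bA: "b \<in> A" using b p(1) q(1) unfolding mixed_strats_def by (metis (mono_tags, lifting) mem_Collect_eq)
    define r where "r = (\<lambda>a. (p a + q a) / 2)"
    have rm: "r \<in> mixed_strats A" using p q
      by (auto simp: mixed_strats_def r_def sum_divide_distrib[symmetric] sum.distrib)
    have le: "th (r a) \<le> (th (p a) + th (q a)) / 2 - m / 8 * (p a - q a)^2" if "a \<in> A" for a
    proof -
      have "th ((1/2) * p a + (1 - 1/2) * q a) \<le> (1/2) * th (p a) + (1 - 1/2) * th (q a) - m / 2 * (1/2) * (1 - 1/2) * (p a - q a)^2"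
        using sc[rule_format, OF ms_range[OF p(1) fin, of a] ms_range[OF q(1) fin, of a], of "1/2"] by simp
      then show ?thesis unfolding r_def add_divide_distrib by simp
    qed
    have "decomp_penalty th A r < (decomp_penalty th A p + decomp_penalty th A q) / 2"
      unfolding decomp_penalty_def sum_divide_distrib sum.distrib[symmetric]
    proof (rule sum_strict_mono_ex1[OF fin])
      show "\<forall>a\<in>A. th (r a) \<le> (th (p a) + th (q a)) / 2"
        using le m by (smt (verit) divide_nonneg_nonneg mult_nonneg_nonneg zero_le_power2)
      have "m / 8 * (p b - q b)^2 > 0" using m b by auto
      then show "\<exists>a\<in>A. th (r a) < (th (p a) + th (q a)) / 2" using le[OF bA] by (intro bexI[OF _ bA]) linarith
    qed
    moreover have "(\<Sum>a\<in>A. y a * r a) = ((\<Sum>a\<in>A. y a * p a) + (\<Sum>a\<in>A. y a * q a)) / 2"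
      by (simp add: r_def sum_divide_distrib[symmetric] sum.distrib[symmetric] algebra_simps)
    ultimately have "F A y r > (F A y p + F A y q) / 2" by (simp add: F_def field_simps)
    moreover have "F A y p = F A y q" using p q by (meson order_antisym)
    ultimately show False using p rm by auto
  qed
  have ex1: "\<exists>!p. p \<in> mixed_strats A \<and> (\<forall>q\<in>mixed_strats A. F A y q \<le> F A y p)"
    using p uniq by blast
  show ?thesis
    using theI'[OF ex1] unfolding choice_k_def F_def by simp
qed

end


lemma sum_upd2:
  fixes f :: "'a \<Rightarrow> 'c \<Rightarrow> real"
  assumes "finite A" "\<alpha> \<in> A" "\<beta> \<in> A" "\<alpha> \<noteq> \<beta>"
  shows "(\<Sum>a\<in>A. f a ((p(\<alpha>:=u, \<beta>:=v)) a)) = (\<Sum>a\<in>A. f a (p a)) - f \<alpha> (p \<alpha>) - f \<beta> (p \<beta>) + f \<alpha> u + f \<beta> v"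
proof -
  have fin': "finite (A - {\<alpha>})" "\<beta> \<in> A - {\<alpha>}" using assms by auto
  have e: "(\<Sum>a\<in>A - {\<alpha>} - {\<beta>}. f a ((p(\<alpha>:=u, \<beta>:=v)) a)) = (\<Sum>a\<in>A - {\<alpha>} - {\<beta>}. f a (p a))"
    by (rule sum.cong) auto
  show ?thesis
    using sum.remove[OF assms(1,2), of "\<lambda>a. f a ((p(\<alpha>:=u, \<beta>:=v)) a)"]
      sum.remove[OF assms(1,2), of "\<lambda>a. f a (p a)"]
      sum.remove[OF fin', of "\<lambda>a. f a ((p(\<alpha>:=u, \<beta>:=v)) a)"]
      sum.remove[OF fin', of "\<lambda>a. f a (p a)"] e assms(4)
    by (simp add: algebra_simps)
qed

context thk begin

lemma kkt:
  assumes fin: "finite A" and ab: "\<alpha> \<in> A" "\<beta> \<in> A" "\<alpha> \<noteq> \<beta>"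
    and pdef: "p = choice_k (decomp_penalty th A) A y" and pa: "p \<alpha> > 0"
  shows "d (p \<alpha>) \<le> y \<alpha> - y \<beta> + d 1"
proof -
  have ne: "A \<noteq> {}" using ab by auto
  note cm = choice_max[OF fin ne, of y, folded pdef]
  have pm: "p \<in> mixed_strats A" using cm by simp
  have pb0: "p \<beta> \<ge> 0" using ms_range[OF pm fin] by simp
  have "p \<alpha> + p \<beta> = sum p {\<alpha>, \<beta>}" using ab by simp
  also have "\<dots> \<le> sum p A"
    using pm ab fin by (intro sum_mono2) (auto simp: mixed_strats_def)
  finally have pab: "p \<alpha> + p \<beta> \<le> 1" using pm by (simp add: mixed_strats_def)
  have pa1: "p \<alpha> \<in> {0<..1}" using pa pab pb0 by auto
  show ?thesis
  proof (rule d_left_limit[OF pa1])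
    fix s assume s: "0 < s" "s < p \<alpha>"
    define e where "e = p \<alpha> - s"
    have e: "0 < e" "e < p \<alpha>" using s by (auto simp: e_def)
    define q where "q = p(\<alpha> := p \<alpha> - e, \<beta> := p \<beta> + e)"
    have qm: "q \<in> mixed_strats A"
    proof -
      have "sum q A = 1"
        using sum_upd2[OF fin ab, of "\<lambda>a x. x" p "p \<alpha> - e" "p \<beta> + e"] pm
        by (simp add: q_def mixed_strats_def)
      then show ?thesis using pm e pb0 ab by (auto simp: mixed_strats_def q_def)
    qed
    have "F A y q \<le> F A y p" using cm qm by blast
    then have ineq: "y \<alpha> * (p \<alpha> - e) + y \<beta> * (p \<beta> + e) - th (p \<alpha> - e) - th (p \<beta> + e)
        \<le> y \<alpha> * p \<alpha> + y \<beta> * p \<beta> - th (p \<alpha>) - th (p \<beta>)"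
      unfolding F_def decomp_penalty_def q_def
      using sum_upd2[OF fin ab, of "\<lambda>a x. y a * x" p "p \<alpha> - e" "p \<beta> + e"]
        sum_upd2[OF fin ab, of "\<lambda>a x. th x" p "p \<alpha> - e" "p \<beta> + e"]
      by simp
    have t1: "th (p \<alpha>) \<ge> th (p \<alpha> - e) + d (p \<alpha> - e) * e"
      using tangent'[of "p \<alpha> - e" "p \<alpha>"] e pa1 by auto
    have t2: "th (p \<beta>) \<ge> th (p \<beta> + e) + d (p \<beta> + e) * (- e)"
      using tangent'[of "p \<beta> + e" "p \<beta>"] e pab pb0 by auto
    have t3: "d (p \<beta> + e) \<le> d 1" using e pab pb0 by (intro d_mono) auto
    have "e * d (p \<beta> + e) \<le> e * d 1" using t3 e by (intro mult_left_mono) auto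
    then have "e * d (p \<alpha> - e) \<le> e * (y \<alpha> - y \<beta> + d 1)"
      using ineq t1 t2 by (simp add: algebra_simps)
    then have "d (p \<alpha> - e) \<le> y \<alpha> - y \<beta> + d 1" using e by simp
    then show "d s \<le> y \<alpha> - y \<beta> + d 1" by (simp add: e_def)
  qed
qed

end


lemma choice_in:
  assumes "finite B" "B \<noteq> {}" "continuous_on {0..1} th" "strongly_convex_on {0..1} th"
    "\<And>z. z \<in> {0<..1} \<Longrightarrow> (th has_real_derivative d z) (at z within {0..1})"
    "continuous_on {0<..1} d"
  shows "choice_k (decomp_penalty th B) B y \<in> mixed_strats B"
proof -
  obtain m where "m > 0" "\<forall>a\<in>{0..1}. \<forall>b\<in>{0..1}. \<forall>l\<in>{0..1}.
      th (l * a + (1 - l) * b) \<le> l * th a + (1 - l) * th b - m / 2 * l * (1 - l) * (a - b)^2"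
    using assms(4) unfolding strongly_convex_on_def by blast
  then interpret thk th d m using assms by unfold_locales auto
  show ?thesis using choice_max[OF assms(1,2)] by simp
qed

theorem proposition4p2:
  fixes N :: "'n set" and A :: "'n \<Rightarrow> 'a set"
    and u :: "'n \<Rightarrow> ('n \<Rightarrow> 'a) \<Rightarrow> real"
    and \<theta> \<theta>' :: "'n \<Rightarrow> real \<Rightarrow> real"
    and \<gamma> :: "'n \<Rightarrow> real"
    and y :: "real \<Rightarrow> 'n \<Rightarrow> 'a \<Rightarrow> real"
    and x :: "real \<Rightarrow> 'n \<Rightarrow> 'a \<Rightarrow> real"
    and k :: 'n and \<alpha> \<beta> :: 'a
  assumes N: "finite N" "N \<noteq> {}"
    and A: "\<And>j. j \<in> N \<Longrightarrow> finite (A j) \<and> A j \<noteq> {}"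
    and theta_cont: "\<And>j. j \<in> N \<Longrightarrow> continuous_on {0..1} (\<theta> j)"
    and theta_sc: "\<And>j. j \<in> N \<Longrightarrow> strongly_convex_on {0..1} (\<theta> j)"
    and theta_deriv: "\<And>j z. j \<in> N \<Longrightarrow> z \<in> {0<..1} \<Longrightarrow>
          (\<theta> j has_real_derivative \<theta>' j z) (at z within {0..1})"
    and theta_deriv_cont: "\<And>j. j \<in> N \<Longrightarrow> continuous_on {0<..1} (\<theta>' j)"
    and gamma: "\<And>j. j \<in> N \<Longrightarrow> \<gamma> j > 0"
    and ode: "\<And>j a t. j \<in> N \<Longrightarrow> a \<in> A j \<Longrightarrow> t \<ge> 0 \<Longrightarrow>
          ((\<lambda>s. y s j a) has_real_derivative
             \<gamma> j * payoff_vec N A u j a (choice_map N A (\<lambda>i. decomp_penalty (\<theta> i) (A i)) (y t)))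
          (at t within {0..})"
    and xdef: "\<And>t. t \<ge> 0 \<Longrightarrow> x t = choice_map N A (\<lambda>i. decomp_penalty (\<theta> i) (A i)) (y t)"
    and k: "k \<in> N" and ab: "\<alpha> \<in> A k" "\<beta> \<in> A k"
    and dominated: "\<forall>z \<in> strategy_space N A. payoff_vec N A u k \<alpha> z < payoff_vec N A u k \<beta> z"
  shows "(\<exists>c. \<forall>t\<ge>0. x t k \<alpha> \<le>
            phi (\<theta>' k) (c - \<gamma> k * (INF z\<in>strategy_space N A. payoff_vec N A u k \<beta> z - payoff_vec N A u k \<alpha> z) * t))
       \<and> (\<bar>deriv0 (\<theta>' k)\<bar> \<noteq> \<infinity> \<longrightarrow> (\<exists>T\<ge>0. \<forall>t\<ge>T. x t k \<alpha> = 0))"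
proof -
  define S where "S = strategy_space N A"
  define f where "f = (\<lambda>z. payoff_vec N A u k \<beta> z - payoff_vec N A u k \<alpha> z)"
  define \<delta> where "\<delta> = (INF z\<in>S. f z)"
  define g where "g = \<gamma> k"
  have g: "g > 0" using gamma k by (simp add: g_def)
  define z0 where "z0 = (\<lambda>j. if j \<in> N then (\<lambda>b. if b = (SOME a. a \<in> A j) then 1 else 0) else (\<lambda>_. 0::real))"
  have z0: "z0 \<in> S"
  proof -
    have "z0 j \<in> mixed_strats (A j)" if "j \<in> N" for j
    proof -
      have s: "(SOME a. a \<in> A j) \<in> A j" using A[OF that] by (simp add: some_in_eq)
      then show ?thesis using that A[OF that] by (auto simp: z0_def mixed_strats_def)
    qed
    then show ?thesis by (auto simp: S_def strategy_space_def z0_def)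
  qed
  have abne: "\<alpha> \<noteq> \<beta>" using dominated z0 by (auto simp: S_def)
  have Sc: "compact S" unfolding S_def by (rule strategy_space_compact) (use A in auto)
  have fc: "continuous_on S f" unfolding f_def
    by (intro continuous_on_diff continuous_on_subset[OF payoff_vec_cont]) auto
  obtain zm where zm: "zm \<in> S" "\<forall>z\<in>S. f zm \<le> f z"
    using continuous_attains_inf[OF Sc _ fc] z0 by blast
  have \<delta>eq: "\<delta> = f zm" unfolding \<delta>_def using zm by (intro cInf_eq_minimum) auto
  have \<delta>pos: "\<delta> > 0" using \<delta>eq zm dominated by (auto simp: f_def S_def)
  have \<delta>le: "\<And>z. z \<in> S \<Longrightarrow> \<delta> \<le> f z" using \<delta>eq zm by auto
  have xS: "x t \<in> S" if "t \<ge> 0" for t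
  proof -
    have "choice_k (decomp_penalty (\<theta> j) (A j)) (A j) (y t j) \<in> mixed_strats (A j)" if "j \<in> N" for j
      using A[OF that] theta_cont[OF that] theta_sc[OF that] theta_deriv[OF that] theta_deriv_cont[OF that]
      by (intro choice_in) auto
    then show ?thesis using xdef[OF that]
      by (auto simp: S_def strategy_space_def choice_map_def)
  qed
  define D where "D = (\<lambda>t. y t k \<alpha> - y t k \<beta>)"
  have Dder: "(D has_real_derivative g * (- f (x t))) (at t within {0..})" if "t \<ge> 0" for t
  proof -
    have "((\<lambda>s. y s k \<alpha> - y s k \<beta>) has_real_derivative
        \<gamma> k * payoff_vec N A u k \<alpha> (x t) - \<gamma> k * payoff_vec N A u k \<beta> (x t)) (at t within {0..})"
      using ode[OF k ab(1) that] ode[OF k ab(2) that] xdef[OF that]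
      by (intro derivative_intros) auto
    then show ?thesis by (simp add: D_def f_def g_def algebra_simps)
  qed
  have Dbound: "D t \<le> D 0 - g * \<delta> * t" if "t \<ge> 0" for t
  proof -
    define h where "h = (\<lambda>s. D s + g * \<delta> * s)"
    have hder: "(h has_real_derivative g * (- f (x s)) + g * \<delta>) (at s within {0..})" if "s \<ge> 0" for s
      unfolding h_def using Dder[OF that] by (auto intro!: derivative_eq_intros)
    have "h t \<le> h 0"
    proof (rule DERIV_nonpos_imp_decreasing_open[OF that])
      fix s assume s: "0 < s" "s < t"
      have "at s within {0..} = at s" by (rule at_within_interior) (use s in auto)
      then have "(h has_real_derivative g * (- f (x s)) + g * \<delta>) (at s)" using hder[of s] s by simp
      moreover have "g * (- f (x s)) + g * \<delta> \<le> 0"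
        using \<delta>le[OF xS[of s]] s g by (simp add: algebra_simps mult_left_mono)
      ultimately show "\<exists>y. (h has_real_derivative y) (at s) \<and> y \<le> 0" by blast
    next
      show "continuous_on {0..t} h"
        unfolding continuous_on_eq_continuous_within
      proof
        fix s assume s: "s \<in> {0..t}"
        have "continuous (at s within {0..}) h" using hder[of s] s by (intro DERIV_continuous) auto
        then show "continuous (at s within {0..t}) h" by (rule continuous_within_subset) auto
      qed
    qed
    then show ?thesis by (simp add: h_def)
  qed
  obtain m where "m > 0" "\<forall>a\<in>{0..1}. \<forall>b\<in>{0..1}. \<forall>l\<in>{0..1}.
      \<theta> k (l * a + (1 - l) * b) \<le> l * \<theta> k a + (1 - l) * \<theta> k b - m / 2 * l * (1 - l) * (a - b)^2"
    using theta_sc[OF k] unfolding strongly_convex_on_def by blast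
  then interpret thk "\<theta> k" "\<theta>' k" m using theta_deriv[OF k] theta_deriv_cont[OF k] theta_cont[OF k]
    by unfold_locales auto
  define c where "c = D 0 + \<theta>' k 1"
  have main: "x t k \<alpha> \<le> phi (\<theta>' k) (c - g * \<delta> * t)" if t: "t \<ge> 0" for t
  proof -
    define p where "p = choice_k (decomp_penalty (\<theta> k) (A k)) (A k) (y t k)"
    have xp: "x t k = p" using xdef[OF t] k by (simp add: choice_map_def p_def)
    have pm: "p \<in> mixed_strats (A k)" using xS[OF t] k xp by (auto simp: S_def strategy_space_def)
    have "p \<alpha> \<ge> 0" using pm ab by (auto simp: mixed_strats_def)
    then consider "p \<alpha> = 0" | "p \<alpha> > 0" by linarith
    then show ?thesis
    proof cases
      case 1 then show ?thesis using xp phi_nonneg by simp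
    next
      case 2
      have "\<theta>' k (p \<alpha>) \<le> y t k \<alpha> - y t k \<beta> + \<theta>' k 1"
        using kkt[OF _ ab abne p_def 2] A[OF k] by simp
      also have "\<dots> \<le> c - g * \<delta> * t" using Dbound[OF t] by (simp add: c_def D_def)
      finally have "\<theta>' k (p \<alpha>) \<le> c - g * \<delta> * t" .
      moreover have "p \<alpha> \<le> 1" using ms_range[OF pm, of \<alpha>] A[OF k] by simp
      ultimately show ?thesis using phi_bound[of "p \<alpha>"] 2 xp by simp
    qed
  qed
  have part1: "\<exists>c. \<forall>t\<ge>0. x t k \<alpha> \<le> phi (\<theta>' k) (c - g * \<delta> * t)" using main by blast
  have part2: "\<exists>T\<ge>0. \<forall>t\<ge>T. x t k \<alpha> = 0" if fin: "\<bar>deriv0 (\<theta>' k)\<bar> \<noteq> \<infinity>"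
  proof -
    obtain r where r: "deriv0 (\<theta>' k) = ereal r" using fin by (cases "deriv0 (\<theta>' k)") auto
    define T where "T = max 0 ((c - r) / (g * \<delta>))"
    have gd: "g * \<delta> > 0" using g \<delta>pos by simp
    show ?thesis
    proof (intro exI[of _ T] conjI allI impI)
      fix t assume tT: "T \<le> t"
      then have t0: "t \<ge> 0" by (simp add: T_def)
      have "(c - r) / (g * \<delta>) \<le> t" using tT by (simp add: T_def)
      then have "c - r \<le> t * (g * \<delta>)" using gd by (simp add: divide_le_eq)
      then have "c - g * \<delta> * t \<le> r" by (simp add: algebra_simps)
      then have "phi (\<theta>' k) (c - g * \<delta> * t) = 0" using r by (simp add: phi_def)
      moreover have "x t k \<alpha> \<ge> 0"
        using xS[OF t0] k ab by (auto simp: S_def strategy_space_def mixed_strats_def)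
      ultimately show "x t k \<alpha> = 0" using main[OF t0] by simp
    qed (simp add: T_def)
  qed
  show ?thesis using part1 part2 unfolding g_def \<delta>_def f_def S_def by blast
qed

end
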